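(* Let $(M,d)$ be a complete pointed metric space. Each of the sets $\mathcal{R}\setminus d^{-1}(0)$, $p^{-1}(M\times M)$ and $\widetilde{M}$ belongs to $\mathfrak{C}$; that is, for each such set $C$, whenever $\mu,\nu$ are positive Radon measures on $\beta\widetilde{M}$ with $\mu\preccurlyeq\nu$ and $\nu$ concentrated on $C$, $\mu$ is also concentrated on $C$.
   Context: $\widetilde{M}=\{(x,y)\in M\times M:x\ne y\}$, viewed inside its Stone–Čech compactification $\beta\widetilde{M}$; Radon measures identified with $C(\beta\widetilde{M})^*$. $d:\beta\widetilde{M}\to[0,\infty]$ continuously extends the metric on $\widetilde{M}$. $M^u$ is the uniform (Samuel) compactification of $M$; $p_1,p_2:\beta\widetilde{M}\to M^u$ continuously extend the coordinate projections, $p=(p_1,p_2)$. $\mathcal{R}(M)=\{\xi\in M^u:\overline{d_0}(\xi)<\infty\}$, where $\overline{d_0}:M^u\to[0,\infty]$ continuously extends $x\mapsto d(x,0)$ ($0$ the base point), and $\mathcal{R}=p^{-1}(\mathcal{R}(M)\times\mathcal{R}(M))$. $G$ is the set of $g\in C(\beta\widetilde{M})$ with $d(x,y)g(x,y)\le d(x,u)g(x,u)+d(u,y)g(u,y)$ for all distinct $x,u,y\in M$; $\mu\preccurlyeq\nu$ iff $\int g\,d\mu\le\int g\,d\nu$ for all $g\in G$. $\mathfrak{C}$ is the family of Borel sets with the stated preservation property. Throughout, $M$ has at least three distinct points. *)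

theory Defs
  imports "HOL-Analysis.Analysis"
begin

definition Mtilde :: "('a \<times> 'a) set" where
  "Mtilde = {(x, y). x \<noteq> y}"

definition is_stone_cech_compactification ::
    "'a::topological_space set \<Rightarrow> ('a \<Rightarrow> 'b::t2_space) \<Rightarrow> bool" where
  "is_stone_cech_compactification X e \<longleftrightarrow>
     compact (UNIV :: 'b set) \<and>
     (\<exists>e'. homeomorphism X (e ` X) e e') \<and>
     closure (e ` X) = UNIV \<and>
     (\<forall>f :: 'a \<Rightarrow> real. continuous_on X f \<and> bounded (f ` X) \<longrightarrow>
        (\<exists>g :: 'b \<Rightarrow> real. continuous_on UNIV g \<and> (\<forall>x\<in>X. g (e x) = f x)))"

definition is_samuel_compactification :: "('a::metric_space \<Rightarrow> 'c::t2_space) \<Rightarrow> bool" where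
  "is_samuel_compactification j \<longleftrightarrow>
     compact (UNIV :: 'c set) \<and>
     (\<exists>j'. homeomorphism UNIV (range j) j j') \<and>
     closure (range j) = UNIV \<and>
     (\<forall>f :: 'a \<Rightarrow> real. uniformly_continuous_on UNIV f \<and> bounded (range f) \<longrightarrow>
        (\<exists>g :: 'c \<Rightarrow> real. continuous_on UNIV g \<and> (\<forall>x. g (j x) = f x))) \<and>
     (\<forall>g :: 'c \<Rightarrow> real. continuous_on UNIV g \<longrightarrow> uniformly_continuous_on UNIV (g \<circ> j))"

definition radon_measure :: "'b::topological_space measure \<Rightarrow> bool" where
  "radon_measure \<mu> \<longleftrightarrow>
     sets \<mu> = sets borel \<and> emeasure \<mu> UNIV < \<infinity> \<and>
     (\<forall>A\<in>sets borel. emeasure \<mu> A = (INF U\<in>{U. open U \<and> A \<subseteq> U}. emeasure \<mu> U)) \<and>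
     (\<forall>U. open U \<longrightarrow> emeasure \<mu> U = (SUP K\<in>{K. compact K \<and> K \<subseteq> U}. emeasure \<mu> K))"

definition concentrated_on :: "'b measure \<Rightarrow> 'b set \<Rightarrow> bool" where
  "concentrated_on \<mu> C \<longleftrightarrow> emeasure \<mu> (space \<mu> - C) = 0"

definition G_set :: "('a::metric_space \<times> 'a \<Rightarrow> 'b::topological_space) \<Rightarrow> ('b \<Rightarrow> real) set" where
  "G_set \<iota> = {g. continuous_on UNIV g \<and>
     (\<forall>x u y. x \<noteq> u \<and> u \<noteq> y \<and> x \<noteq> y \<longrightarrow>
        dist x y * g (\<iota> (x, y)) \<le> dist x u * g (\<iota> (x, u)) + dist u y * g (\<iota> (u, y)))}"

definition preceq :: "('a::metric_space \<times> 'a \<Rightarrow> 'b::topological_space) \<Rightarrow> 'b measure \<Rightarrow> 'b measure \<Rightarrow> bool" where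
  "preceq \<iota> \<mu> \<nu> \<longleftrightarrow> (\<forall>g\<in>G_set \<iota>. integral\<^sup>L \<mu> g \<le> integral\<^sup>L \<nu> g)"

definition frakC :: "('a::metric_space \<times> 'a \<Rightarrow> 'b::topological_space) \<Rightarrow> 'b set set" where
  "frakC \<iota> = {C. C \<in> sets borel \<and>
     (\<forall>\<mu> \<nu>. radon_measure \<mu> \<and> radon_measure \<nu> \<and> preceq \<iota> \<mu> \<nu> \<and> concentrated_on \<nu> C
        \<longrightarrow> concentrated_on \<mu> C)}"

end

theory Submission
  imports Defs
begin

lemma radon_sets: "radon_measure \<mu> \<Longrightarrow> sets \<mu> = sets borel"
  unfolding radon_measure_def by (rule conjunct1)

lemma radon_space: "radon_measure \<mu> \<Longrightarrow> space \<mu> = UNIV"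
  using sets_eq_imp_space_eq[OF radon_sets] by simp

lemma radon_finite: "radon_measure \<mu> \<Longrightarrow> finite_measure \<mu>"
proof (rule finite_measureI)
  assume r: "radon_measure \<mu>"
  hence "emeasure \<mu> UNIV < \<infinity>" unfolding radon_measure_def by (elim conjE)
  thus "emeasure \<mu> (space \<mu>) \<noteq> \<infinity>" using radon_space[OF r] by simp
qed

lemma radon_outer: "radon_measure \<mu> \<Longrightarrow> A \<in> sets borel \<Longrightarrow>
   emeasure \<mu> A = (INF U\<in>{U. open U \<and> A \<subseteq> U}. emeasure \<mu> U)"
  unfolding radon_measure_def by (elim conjE) (erule bspec)

lemma G_cont: "g \<in> G_set \<iota> \<Longrightarrow> continuous_on UNIV g"
  unfolding G_set_def mem_Collect_eq by (rule conjunct1)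

lemma preceq_D: "preceq \<iota> \<mu> \<nu> \<Longrightarrow> g \<in> G_set \<iota> \<Longrightarrow> integral\<^sup>L \<mu> g \<le> integral\<^sup>L \<nu> g"
  unfolding preceq_def by (erule bspec)

lemma AE_bound: fixes g :: "'b::topological_space \<Rightarrow> real"
  assumes "\<And>w. \<bar>g w\<bar> \<le> B" shows "AE x in \<mu>. norm (g x) \<le> B"
  using assms by simp

lemma radon_integrable:
  fixes g :: "'b::topological_space \<Rightarrow> real"
  assumes "radon_measure \<mu>" "continuous_on UNIV g" "\<And>w. \<bar>g w\<bar> \<le> B"
  shows "integrable \<mu> g"
proof -
  have "g \<in> borel_measurable borel" by (rule borel_measurable_continuous_onI[OF assms(2)])
  moreover have "borel_measurable \<mu> = (borel_measurable borel :: ('b \<Rightarrow> real) set)"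
    by (rule measurable_cong_sets[OF radon_sets[OF assms(1)] refl])
  ultimately have m: "g \<in> borel_measurable \<mu>" by simp
  show ?thesis
    by (rule finite_measure.integrable_const_bound[OF radon_finite[OF assms(1)] AE_bound[OF assms(3)] m])
qed

lemma frakC_D: assumes "C \<in> frakC \<iota>" "radon_measure \<mu>" "radon_measure \<nu>" "preceq \<iota> \<mu> \<nu>"
   "concentrated_on \<nu> C" shows "concentrated_on \<mu> C"
proof -
  have "\<forall>\<mu> \<nu>. radon_measure \<mu> \<and> radon_measure \<nu> \<and> preceq \<iota> \<mu> \<nu> \<and> concentrated_on \<nu> C
        \<longrightarrow> concentrated_on \<mu> C" using assms(1) unfolding frakC_def mem_Collect_eq by (rule conjunct2)
  hence "radon_measure \<mu> \<and> radon_measure \<nu> \<and> preceq \<iota> \<mu> \<nu> \<and> concentrated_on \<nu> C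
        \<longrightarrow> concentrated_on \<mu> C" by (rule spec[of _ \<nu>, OF spec[of _ \<mu>]])
  moreover have "radon_measure \<mu> \<and> radon_measure \<nu> \<and> preceq \<iota> \<mu> \<nu> \<and> concentrated_on \<nu> C"
    using assms(2-5) by simp
  ultimately show ?thesis by (rule mp)
qed

lemma frakC_borel: "C \<in> frakC \<iota> \<Longrightarrow> C \<in> sets borel"
  unfolding frakC_def mem_Collect_eq by (rule conjunct1)

lemma frakC_I: assumes "C \<in> sets borel" "\<And>\<mu> \<nu>. radon_measure \<mu> \<Longrightarrow> radon_measure \<nu> \<Longrightarrow> preceq \<iota> \<mu> \<nu>
   \<Longrightarrow> concentrated_on \<nu> C \<Longrightarrow> concentrated_on \<mu> C" shows "C \<in> frakC \<iota>"
  unfolding frakC_def mem_Collect_eq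
proof (intro conjI allI impI)
  show "C \<in> sets borel" by (rule assms(1))
  fix \<mu> \<nu> assume h: "radon_measure \<mu> \<and> radon_measure \<nu> \<and> preceq \<iota> \<mu> \<nu> \<and> concentrated_on \<nu> C"
  from h have h1: "radon_measure \<mu>" "radon_measure \<nu>" "preceq \<iota> \<mu> \<nu>" "concentrated_on \<nu> C" by simp_all
  show "concentrated_on \<mu> C" by (rule assms(2)[OF h1])
qed

lemma frakC_Int:
  fixes \<iota> :: "'a::metric_space \<times> 'a \<Rightarrow> 'b::topological_space"
  assumes "C1 \<in> frakC \<iota>" "C2 \<in> frakC \<iota>"
  shows "C1 \<inter> C2 \<in> frakC \<iota>"
proof -
  have b: "C1 \<in> sets borel" "C2 \<in> sets borel" using assms by (auto intro: frakC_borel)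
  show ?thesis
  proof (rule frakC_I)
    show "C1 \<inter> C2 \<in> sets borel" using b by simp
    fix \<mu> \<nu> :: "'b measure"
    assume r: "radon_measure \<mu>" "radon_measure \<nu>" "preceq \<iota> \<mu> \<nu>" "concentrated_on \<nu> (C1 \<inter> C2)"
    have s: "sets \<mu> = sets borel" "sets \<nu> = sets borel" "space \<mu> = UNIV" "space \<nu> = UNIV"
      using radon_sets[OF r(1)] radon_sets[OF r(2)] radon_space[OF r(1)] radon_space[OF r(2)] by simp_all
    have n0: "emeasure \<nu> (UNIV - (C1 \<inter> C2)) = 0" using r(4) s unfolding concentrated_on_def by simp
    have "emeasure \<nu> (UNIV - C1) = 0" "emeasure \<nu> (UNIV - C2) = 0"
      by (rule emeasure_eq_0[OF _ n0]; use s b in auto)+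
    hence "concentrated_on \<nu> C1" "concentrated_on \<nu> C2" unfolding concentrated_on_def using s by auto
    hence "concentrated_on \<mu> C1" "concentrated_on \<mu> C2" using frakC_D[OF assms(1) r(1,2,3)] frakC_D[OF assms(2) r(1,2,3)] by blast+
    hence m: "emeasure \<mu> (UNIV - C1) = 0" "emeasure \<mu> (UNIV - C2) = 0" unfolding concentrated_on_def using s by auto
    have "emeasure \<mu> ((UNIV - C1) \<union> (UNIV - C2)) = 0"
      using emeasure_Un_null_set[of "UNIV - C1" \<mu> "UNIV - C2"] m s b by (auto simp: null_sets_def)
    moreover have "UNIV - (C1 \<inter> C2) = (UNIV - C1) \<union> (UNIV - C2)" by blast
    ultimately show "concentrated_on \<mu> (C1 \<inter> C2)" unfolding concentrated_on_def using s
      by simp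
  qed
qed

lemma frakC_UNIV:
  fixes \<iota> :: "'a::metric_space \<times> 'a \<Rightarrow> 'b::topological_space"
  shows "UNIV \<in> frakC \<iota>"
proof (rule frakC_I)
  show "UNIV \<in> sets (borel :: 'b measure)" by (metis sets.top space_borel)
  fix \<mu> :: "'b measure"
  have "space \<mu> - UNIV = {}" by blast
  thus "concentrated_on \<mu> UNIV" unfolding concentrated_on_def by (simp only: emeasure_empty)
qed


lemma frakC_crit:
  fixes \<iota> :: "'a::metric_space \<times> 'a \<Rightarrow> 'b::topological_space"
    and A :: "nat \<Rightarrow> 'b set"
  assumes cU: "compact (UNIV::'b set)"
  and C: "C \<in> sets borel" and C': "C' \<in> frakC \<iota>" "C \<subseteq> C'"
  and A: "\<And>k. A k \<in> sets borel" "(UNIV - C) \<inter> C' \<subseteq> (\<Union>k. A k)"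
  and key: "\<And>k. \<exists>c>0. \<forall>K \<tau>. compact K \<longrightarrow> K \<subseteq> C \<longrightarrow> \<tau> > 0 \<longrightarrow>
     (\<exists>g V. g \<in> G_set \<iota> \<and> (\<forall>w. 0 \<le> g w \<and> g w \<le> 1) \<and> open V \<and> K \<subseteq> V \<and>
        (\<forall>w\<in>V. g w \<le> \<tau>) \<and> (\<forall>w\<in>A k. c \<le> g w))"
  shows "C \<in> frakC \<iota>"
proof -
  have C'b: "C' \<in> sets borel" using frakC_borel[OF C'(1)] .
  show ?thesis
  proof (rule frakC_I[OF C])
    fix \<mu> \<nu> :: "'b measure"
    assume r: "radon_measure \<mu>" "radon_measure \<nu>" "preceq \<iota> \<mu> \<nu>" "concentrated_on \<nu> C"
    have s: "sets \<mu> = sets borel" "sets \<nu> = sets borel" "space \<mu> = UNIV" "space \<nu> = UNIV"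
      using radon_sets[OF r(1)] radon_sets[OF r(2)] radon_space[OF r(1)] radon_space[OF r(2)] by simp_all
    interpret mu: finite_measure \<mu> by (rule radon_finite[OF r(1)])
    interpret nu: finite_measure \<nu> by (rule radon_finite[OF r(2)])
    have n0: "emeasure \<nu> (UNIV - C) = 0" using r(4) s unfolding concentrated_on_def by simp
    have "emeasure \<nu> (UNIV - C') = 0"
      by (rule emeasure_eq_0[OF _ n0]) (use s C C' in auto)
    hence "concentrated_on \<nu> C'" unfolding concentrated_on_def using s by auto
    hence "concentrated_on \<mu> C'" using frakC_D[OF C'(1) r(1,2,3)] by blast
    hence m0: "emeasure \<mu> (UNIV - C') = 0" unfolding concentrated_on_def using s by auto
    have Ak: "emeasure \<mu> (A k) = 0" for k
    proof -
      from key[of k] obtain c where ck: "c > 0 \<and> (\<forall>K \<tau>. compact K \<longrightarrow> K \<subseteq> C \<longrightarrow> \<tau> > 0 \<longrightarrow>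
       (\<exists>g V. g \<in> G_set \<iota> \<and> (\<forall>w. 0 \<le> g w \<and> g w \<le> 1) \<and> open V \<and> K \<subseteq> V \<and>
        (\<forall>w\<in>V. g w \<le> \<tau>) \<and> (\<forall>w\<in>A k. c \<le> g w)))" ..
      have c: "c > 0" using ck by (rule conjunct1)
      have kc: "\<forall>K \<tau>. compact K \<longrightarrow> K \<subseteq> C \<longrightarrow> \<tau> > 0 \<longrightarrow>
       (\<exists>g V. g \<in> G_set \<iota> \<and> (\<forall>w. 0 \<le> g w \<and> g w \<le> 1) \<and> open V \<and> K \<subseteq> V \<and>
        (\<forall>w\<in>V. g w \<le> \<tau>) \<and> (\<forall>w\<in>A k. c \<le> g w))" using ck by (rule conjunct2)
      define m where "m = measure \<mu> (A k)"
      define T where "T = measure \<nu> UNIV"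
      have T0: "T \<ge> 0" unfolding T_def by simp
      have main: "c * m \<le> \<epsilon> * (1 + T)" if eps: "\<epsilon> > 0" for \<epsilon>
      proof -
        have "(INF U\<in>{U. open U \<and> UNIV - C \<subseteq> U}. emeasure \<nu> U) = emeasure \<nu> (UNIV - C)"
          using radon_outer[OF r(2), of "UNIV - C"] C by simp
        also have "\<dots> < ennreal \<epsilon>" using n0 eps by simp
        finally obtain U where U: "open U" "UNIV - C \<subseteq> U" "emeasure \<nu> U < ennreal \<epsilon>"
          by (auto simp: INF_less_iff)
        have mU: "measure \<nu> U < \<epsilon>" using U(3) eps
          by (simp add: nu.emeasure_eq_measure ennreal_less_iff)
        have cK: "compact (UNIV - U)" by (rule compact_diff[OF cU U(1)])
        obtain g V where g: "g \<in> G_set \<iota>" "\<forall>w. 0 \<le> g w \<and> g w \<le> 1" "open V" "UNIV - U \<subseteq> V"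
          "\<forall>w\<in>V. g w \<le> \<epsilon>" "\<forall>w\<in>A k. c \<le> g w"
        proof -
          have "UNIV - U \<subseteq> C" using U(2) by blast
          from kc[rule_format, OF cK this eps] show ?thesis using that by blast
        qed
        have gc: "continuous_on UNIV g" by (rule G_cont[OF g(1)])
        have gb: "\<bar>g w\<bar> \<le> 1" for w using g(2) by auto
        have im: "integrable \<mu> g" by (rule radon_integrable[OF r(1) gc gb])
        have in': "integrable \<nu> g" by (rule radon_integrable[OF r(2) gc gb])
        have "c * m = integral\<^sup>L \<mu> (\<lambda>w. c * indicator (A k) w)"
          unfolding m_def using s by simp
        also have "\<dots> \<le> integral\<^sup>L \<mu> g"
        proof (rule integral_mono)
          show "integrable \<mu> (\<lambda>w. c * indicator (A k) w)"
            using A(1)[of k] s by (intro integrable_mult_right) (auto intro!: integrable_indicator simp: mu.emeasure_finite less_top[symmetric])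
        qed (use im g(2,6) c in \<open>auto simp: indicator_def\<close>)
        also have "\<dots> \<le> integral\<^sup>L \<nu> g" by (rule preceq_D[OF r(3) g(1)])
        also have "\<dots> \<le> integral\<^sup>L \<nu> (\<lambda>w. indicator U w + \<epsilon>)"
        proof (rule integral_mono[OF in'])
          show "integrable \<nu> (\<lambda>w. indicator U w + \<epsilon>)"
            using U(1) s by (intro Bochner_Integration.integrable_add) (auto intro!: integrable_indicator simp: nu.emeasure_finite less_top[symmetric])
          show "g w \<le> indicator U w + \<epsilon>" for w
          proof (cases "w \<in> V")
            case True thus ?thesis using g(5) eps by (auto simp: indicator_def)
          next
            case False
            hence "w \<in> U" using g(4) by blast
            moreover have "g w \<le> 1" using g(2) by blast
            ultimately show ?thesis using eps by (simp add: indicator_def)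
          qed
        qed
        also have "\<dots> = measure \<nu> U + \<epsilon> * T"
          using U(1) s unfolding T_def
          by (subst Bochner_Integration.integral_add) (auto intro!: integrable_indicator simp: nu.emeasure_finite less_top[symmetric])
        also have "\<dots> \<le> \<epsilon> * (1 + T)" using mU by (simp add: algebra_simps)
        finally show ?thesis .
      qed
      have "c * m \<le> 0"
      proof (rule field_le_epsilon)
        fix e :: real assume e: "0 < e"
        have "c * m \<le> (e / (1 + T)) * (1 + T)" using main[of "e / (1 + T)"] e T0 by simp
        thus "c * m \<le> 0 + e" using T0 by simp
      qed
      hence "m = 0" using c unfolding m_def by (simp add: mult_le_0_iff measure_nonneg antisym)
      thus ?thesis unfolding m_def using mu.emeasure_eq_measure by simp
    qed
    have "emeasure \<mu> ((\<Union>k. A k) \<union> (UNIV - C')) = 0"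
    proof -
      have "emeasure \<mu> (\<Union>k. A k) = 0" by (rule emeasure_UN_eq_0) (use Ak A(1) s in auto)
      thus ?thesis
        using emeasure_Un_null_set[of "\<Union>k. A k" \<mu> "UNIV - C'"] m0 s C'b A(1)
        by (auto simp: null_sets_def)
    qed
    hence "emeasure \<mu> (UNIV - C) = 0"
      by (rule emeasure_eq_0[rotated]) (use A s C C'b in auto)
    thus "concentrated_on \<mu> C" unfolding concentrated_on_def using s by simp
  qed
qed



locale setting =
  fixes z :: "'a::complete_space"
    and \<iota> :: "'a \<times> 'a \<Rightarrow> 'b::t2_space" and dd :: "'b \<Rightarrow> ennreal"
    and j :: "'a \<Rightarrow> 'c::t2_space" and p1 p2 :: "'b \<Rightarrow> 'c" and d0 :: "'c \<Rightarrow> ennreal"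
  assumes SC: "is_stone_cech_compactification Mtilde \<iota>"
    and dd_cont: "continuous_on UNIV dd"
    and dd_iota: "\<forall>x y. x \<noteq> y \<longrightarrow> dd (\<iota> (x, y)) = ennreal (dist x y)"
    and SJ: "is_samuel_compactification j"
    and p1_cont: "continuous_on UNIV p1" and p2_cont: "continuous_on UNIV p2"
    and p_iota: "\<forall>x y. x \<noteq> y \<longrightarrow> p1 (\<iota> (x, y)) = j x \<and> p2 (\<iota> (x, y)) = j y"
    and d0_cont: "continuous_on UNIV d0"
    and d0_j: "\<forall>x. d0 (j x) = ennreal (dist x z)"
begin

lemma cUb: "compact (UNIV :: 'b set)"
  using SC unfolding is_stone_cech_compactification_def by (elim conjE)

lemma dense_b: "closure (\<iota> ` Mtilde) = UNIV"
  using SC unfolding is_stone_cech_compactification_def by (elim conjE)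

lemma iota_cont: "continuous_on Mtilde \<iota>"
proof -
  have "\<exists>e'. homeomorphism Mtilde (\<iota> ` Mtilde) \<iota> e'"
    using SC unfolding is_stone_cech_compactification_def by (elim conjE)
  then obtain e' where "homeomorphism Mtilde (\<iota> ` Mtilde) \<iota> e'" ..
  thus ?thesis unfolding homeomorphism_def by (elim conjE)
qed

lemma ext_b:
  fixes f :: "'a \<times> 'a \<Rightarrow> real"
  assumes "continuous_on Mtilde f" "bounded (f ` Mtilde)"
  obtains g where "continuous_on UNIV g" "\<And>x. x \<in> Mtilde \<Longrightarrow> g (\<iota> x) = f x"
proof -
  have "\<forall>f :: 'a \<times> 'a \<Rightarrow> real. continuous_on Mtilde f \<and> bounded (f ` Mtilde) \<longrightarrow>
        (\<exists>g :: 'b \<Rightarrow> real. continuous_on UNIV g \<and> (\<forall>x\<in>Mtilde. g (\<iota> x) = f x))"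
    using SC unfolding is_stone_cech_compactification_def by (elim conjE)
  hence "\<exists>g :: 'b \<Rightarrow> real. continuous_on UNIV g \<and> (\<forall>x\<in>Mtilde. g (\<iota> x) = f x)"
    using assms by simp
  thus ?thesis using that by auto
qed

lemma cUc: "compact (UNIV :: 'c set)"
  using SJ unfolding is_samuel_compactification_def by (elim conjE)

lemma dense_c: "closure (range j) = UNIV"
  using SJ unfolding is_samuel_compactification_def by (elim conjE)

lemma j_cont: "continuous_on UNIV j"
proof -
  have "\<exists>j'. homeomorphism UNIV (range j) j j'"
    using SJ unfolding is_samuel_compactification_def by (elim conjE)
  then obtain j' where "homeomorphism UNIV (range j) j j'" ..
  thus ?thesis unfolding homeomorphism_def by (elim conjE)
qed

lemma ext_c:
  fixes f :: "'a \<Rightarrow> real"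
  assumes "uniformly_continuous_on UNIV f" "bounded (range f)"
  obtains g where "continuous_on UNIV g" "\<And>x. g (j x) = f x"
proof -
  have "\<forall>f :: 'a \<Rightarrow> real. uniformly_continuous_on UNIV f \<and> bounded (range f) \<longrightarrow>
        (\<exists>g :: 'c \<Rightarrow> real. continuous_on UNIV g \<and> (\<forall>x. g (j x) = f x))"
    using SJ unfolding is_samuel_compactification_def by (elim conjE)
  hence "\<exists>g :: 'c \<Rightarrow> real. continuous_on UNIV g \<and> (\<forall>x. g (j x) = f x)"
    using assms by simp
  thus ?thesis using that by auto
qed

lemma dens_b:
  fixes f :: "'b \<Rightarrow> 'x::topological_space"
  assumes f: "continuous_on UNIV f" and S: "closed S" and V: "open V"
    and h: "\<And>x y. x \<noteq> y \<Longrightarrow> \<iota> (x, y) \<in> V \<Longrightarrow> f (\<iota> (x, y)) \<in> S" and w: "w \<in> V"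
  shows "f w \<in> S"
proof (rule ccontr)
  assume n: "f w \<notin> S"
  define Ob where "Ob = V \<inter> f -` (- S)"
  have oO: "open Ob" unfolding Ob_def using V S f by (intro open_Int open_vimage) auto
  have "w \<in> Ob" using n w unfolding Ob_def by auto
  hence "Ob \<inter> closure (\<iota> ` Mtilde) \<noteq> {}" using dense_b by auto
  hence "Ob \<inter> \<iota> ` Mtilde \<noteq> {}" using open_Int_closure_eq_empty[OF oO] by blast
  then obtain x y where xy: "(x, y) \<in> Mtilde" "\<iota> (x, y) \<in> Ob" by auto
  have "x \<noteq> y" using xy(1) unfolding Mtilde_def by simp
  thus False using h xy(2) unfolding Ob_def by auto
qed

lemma dens_c:
  fixes f :: "'c \<Rightarrow> 'x::topological_space"
  assumes f: "continuous_on UNIV f" and S: "closed S" and V: "open V"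
    and h: "\<And>x. j x \<in> V \<Longrightarrow> f (j x) \<in> S" and w: "w \<in> V"
  shows "f w \<in> S"
proof (rule ccontr)
  assume n: "f w \<notin> S"
  define Ob where "Ob = V \<inter> f -` (- S)"
  have oO: "open Ob" unfolding Ob_def using V S f by (intro open_Int open_vimage) auto
  have "w \<in> Ob" using n w unfolding Ob_def by auto
  hence "Ob \<inter> closure (range j) \<noteq> {}" using dense_c by auto
  hence "Ob \<inter> range j \<noteq> {}" using open_Int_closure_eq_empty[OF oO] by blast
  then obtain x where "j x \<in> Ob" by auto
  thus False using h unfolding Ob_def by auto
qed

lemma min1_lip: "\<bar>min 1 (dist y x) - min 1 (dist y' x)\<bar> \<le> dist y y'"
proof -
  have "dist y x \<le> dist y y' + dist y' x" by (rule dist_triangle)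
  moreover have "dist y' x \<le> dist y' y + dist y x" by (rule dist_triangle)
  moreover have "dist y' y = dist y y'" by (rule dist_commute)
  ultimately show ?thesis by (auto simp: min_def abs_if)
qed

definition Dx :: "'a \<Rightarrow> 'c \<Rightarrow> real" where
  "Dx x = (SOME g. continuous_on UNIV g \<and> (\<forall>y. g (j y) = min 1 (dist y x)))"

lemma Dx_ex: "\<exists>g. continuous_on UNIV g \<and> (\<forall>y. g (j y) = min 1 (dist y x))"
proof -
  have uc: "uniformly_continuous_on UNIV (\<lambda>y. min 1 (dist y x))"
    unfolding uniformly_continuous_on_def
  proof (intro allI impI)
    fix e :: real assume e: "0 < e"
    show "\<exists>d>0. \<forall>y\<in>UNIV. \<forall>y'\<in>UNIV. dist y' y < d \<longrightarrow> dist (min 1 (dist y' x)) (min 1 (dist y x)) < e"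
    proof (intro exI[of _ e] conjI ballI impI)
      fix y y' :: 'a assume "dist y' y < e"
      thus "dist (min 1 (dist y' x)) (min 1 (dist y x)) < e"
        using min1_lip[of y' x y] by (simp add: dist_real_def)
    qed (rule e)
  qed
  have "bounded (range (\<lambda>y. min 1 (dist y x)))"
    unfolding bounded_real by (rule exI[of _ 1]) auto
  then obtain g where "continuous_on UNIV g" "\<And>y. g (j y) = min 1 (dist y x)"
    using ext_c[OF uc] by blast
  thus ?thesis by blast
qed

lemma Dx_cont: "continuous_on UNIV (Dx x)"
  and Dx_j: "Dx x (j y) = min 1 (dist y x)"
proof -
  have "continuous_on UNIV (Dx x) \<and> (\<forall>y. Dx x (j y) = min 1 (dist y x))"
    unfolding Dx_def by (rule someI_ex[OF Dx_ex])
  thus "continuous_on UNIV (Dx x)" "Dx x (j y) = min 1 (dist y x)" by auto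
qed

lemma Dx_range: "Dx x \<xi> \<in> {0..1}"
  by (rule dens_c[OF Dx_cont closed_atLeastAtMost open_UNIV]) (auto simp: Dx_j)

lemma Dx_nonneg: "0 \<le> Dx x \<xi>" and Dx_le1: "Dx x \<xi> \<le> 1"
  using Dx_range[of x \<xi>] by auto

lemma Dx_tri1: "min 1 (dist x y) \<le> Dx x \<xi> + Dx y \<xi>"
proof -
  have "(\<lambda>\<xi>. Dx x \<xi> + Dx y \<xi>) \<xi> \<in> {min 1 (dist x y)..}"
  proof (rule dens_c[OF _ closed_atLeast open_UNIV])
    show "continuous_on UNIV (\<lambda>\<xi>. Dx x \<xi> + Dx y \<xi>)"
      by (intro continuous_on_add Dx_cont)
    fix u
    have "dist x y \<le> dist u x + dist u y" by (rule dist_triangle3)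
    hence "min 1 (dist x y) \<le> min 1 (dist u x) + min 1 (dist u y)"
      using zero_le_dist[of u x] zero_le_dist[of u y] by linarith
    thus "Dx x (j u) + Dx y (j u) \<in> {min 1 (dist x y)..}"
      by (simp add: Dx_j)
  qed simp
  thus ?thesis by simp
qed

lemma Dx_tri2: "Dx x \<xi> \<le> Dx y \<xi> + dist x y"
proof -
  have "(\<lambda>\<xi>. Dx x \<xi> - Dx y \<xi>) \<xi> \<in> {..dist x y}"
  proof (rule dens_c[OF _ closed_atMost open_UNIV])
    show "continuous_on UNIV (\<lambda>\<xi>. Dx x \<xi> - Dx y \<xi>)"
      by (intro continuous_on_diff Dx_cont)
    fix u
    have "\<bar>min 1 (dist u x) - min 1 (dist u y)\<bar> \<le> dist x y"
      using min1_lip[of x u y] by (simp add: dist_commute)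
    thus "Dx x (j u) - Dx y (j u) \<in> {..dist x y}"
      by (auto simp: Dx_j)
  qed simp
  thus ?thesis by simp
qed

definition ee :: "'c \<Rightarrow> real" where
  "ee \<xi> = Inf (range (\<lambda>x. Dx x \<xi>))"

lemma ee_bdd: "bdd_below (range (\<lambda>x. Dx x \<xi>))"
  by (rule bdd_belowI[of _ 0]) (auto simp: Dx_nonneg)

lemma ee_le: "ee \<xi> \<le> Dx x \<xi>"
  unfolding ee_def by (rule cInf_lower[OF _ ee_bdd]) simp

lemma ee_nonneg: "0 \<le> ee \<xi>"
  unfolding ee_def by (rule cInf_greatest) (auto simp: Dx_nonneg)

lemma ee_less: "ee \<xi> < t \<longleftrightarrow> (\<exists>x. Dx x \<xi> < t)"
  unfolding ee_def by (subst cInf_less_iff[OF _ ee_bdd]) auto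

lemma ee_j: "ee (j x) = 0"
  using ee_le[of "j x" x] ee_nonneg[of "j x"] by (simp add: Dx_j)

lemma Dx_zero_imp: assumes "Dx x \<xi> = 0" shows "\<xi> = j x"
proof (rule ccontr)
  assume "\<xi> \<noteq> j x"
  from hausdorff[OF this] obtain U V where UV: "open U" "open V" "\<xi> \<in> U" "j x \<in> V" "U \<inter> V = {}"
    by auto
  have "open (j -` V)" by (rule open_vimage[OF UV(2) j_cont])
  hence "\<forall>y\<in>j -` V. \<exists>r>0. ball y r \<subseteq> j -` V" by (simp only: open_contains_ball)
  moreover have "x \<in> j -` V" using UV(4) by simp
  ultimately have "\<exists>r>0. ball x r \<subseteq> j -` V" by (rule bspec)
  then obtain r where r: "r > 0" "ball x r \<subseteq> j -` V" by auto
  define W where "W = U \<inter> {\<xi>'. Dx x \<xi>' < min 1 r}"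
  have oW: "open W" unfolding W_def
    by (intro open_Int UV(1) open_Collect_less Dx_cont continuous_on_const)
  have "\<xi> \<in> W" unfolding W_def using UV(3) assms r by simp
  hence "W \<inter> closure (range j) \<noteq> {}" using dense_c by auto
  hence "W \<inter> range j \<noteq> {}" using open_Int_closure_eq_empty[OF oW] by blast
  then obtain y where y: "j y \<in> W" by auto
  hence "min 1 (dist y x) < min 1 r" unfolding W_def by (simp add: Dx_j)
  hence "dist x y < r" by (auto simp: min_def dist_commute split: if_splits)
  hence "j y \<in> V" using r(2) by auto
  moreover have "j y \<in> U" using y unfolding W_def by simp
  ultimately show False using UV(5) by blast
qed

lemma ee_zero: assumes "ee \<xi> = 0" shows "\<xi> \<in> range j"
proof -
  have "\<forall>n::nat. \<exists>x. Dx x \<xi> < 1 / Suc n"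
  proof
    fix n :: nat
    have "ee \<xi> < 1 / Suc n" using assms by simp
    thus "\<exists>x. Dx x \<xi> < 1 / Suc n" by (simp only: ee_less)
  qed
  from choice[OF this] obtain s where s': "\<forall>n. Dx (s n) \<xi> < 1 / Suc n" ..
  have s: "Dx (s n) \<xi> < 1 / Suc n" for n using s' by (rule spec)
  have "Cauchy s"
  proof (rule metric_CauchyI)
    fix e :: real assume e: "0 < e"
    obtain N where N: "inverse (of_nat (Suc N)) < min e 1 / 2"
      using reals_Archimedean[of "min e 1 / 2"] e by auto
    show "\<exists>M. \<forall>m\<ge>M. \<forall>n\<ge>M. dist (s m) (s n) < e"
    proof (intro exI[of _ N] allI impI)
      fix m n assume mn: "N \<le> m" "N \<le> n"
      have a: "1 / real (Suc m) \<le> 1 / real (Suc N)" "1 / real (Suc n) \<le> 1 / real (Suc N)"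
        using mn by (intro divide_left_mono; simp)+
      have "min 1 (dist (s m) (s n)) \<le> Dx (s m) \<xi> + Dx (s n) \<xi>" by (rule Dx_tri1)
      also have "\<dots> < 1 / Suc m + 1 / Suc n" using s[of m] s[of n] by simp
      also have "\<dots> \<le> 2 / Suc N" using a by simp
      also have "\<dots> < min e 1" using N by (simp add: inverse_eq_divide)
      finally show "dist (s m) (s n) < e" by (auto simp: min_def split: if_splits)
    qed
  qed
  hence "convergent s" by (rule Cauchy_convergent)
  then obtain x where x: "s \<longlonglongrightarrow> x" unfolding convergent_def ..
  have "Dx x \<xi> \<le> 0"
  proof (rule field_le_epsilon)
    fix t :: real assume t: "0 < t"
    have "\<forall>r>0. \<exists>no. \<forall>n\<ge>no. dist (s n) x < r" using x unfolding lim_sequentially .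
    hence "t / 2 > 0 \<longrightarrow> (\<exists>N1. \<forall>n\<ge>N1. dist (s n) x < t / 2)" by (rule spec)
    hence "\<exists>N1. \<forall>n\<ge>N1. dist (s n) x < t / 2" by (rule mp) (use t in simp)
    then obtain N1 where N1: "\<forall>n\<ge>N1. dist (s n) x < t / 2" ..
    obtain N2 where N2: "inverse (of_nat (Suc N2)) < t / 2"
      using reals_Archimedean[of "t / 2"] t by auto
    define n where "n = max N1 N2"
    have "1 / real (Suc n) \<le> 1 / real (Suc N2)" unfolding n_def by (intro divide_left_mono) simp_all
    hence a: "1 / real (Suc n) < t / 2" using N2 by (simp add: inverse_eq_divide)
    have b: "dist (s n) x < t / 2" using N1 unfolding n_def by simp
    have "Dx x \<xi> \<le> Dx (s n) \<xi> + dist x (s n)" by (rule Dx_tri2)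
    also have "\<dots> < t" using s[of n] a b by (simp add: dist_commute)
    finally show "Dx x \<xi> \<le> 0 + t" by simp
  qed
  hence "Dx x \<xi> = 0" using Dx_nonneg[of x \<xi>] by simp
  hence "\<xi> = j x" by (rule Dx_zero_imp)
  thus ?thesis by simp
qed

lemma range_j_eq: "range j = ee -` {0}"
  using ee_j ee_zero by auto

lemma ee_meas: "ee \<in> borel_measurable borel"
proof (subst borel_measurable_iff_less, intro allI)
  fix a
  have "{w \<in> space borel. ee w < a} = (\<Union>x. {w. Dx x w < a})"
    using ee_less by auto
  also have "\<dots> \<in> sets borel"
    by (intro borel_open open_UN ballI open_Collect_less Dx_cont continuous_on_const)
  finally show "{w \<in> space borel. ee w < a} \<in> sets borel" .
qed

lemma range_j_borel: "range j \<in> sets borel"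
proof -
  have "ee -` {0} \<inter> space borel \<in> sets borel" by (rule measurable_sets[OF ee_meas]) simp
  thus ?thesis unfolding range_j_eq by simp
qed

end


lemma rho_tri:
  fixes dxy dxu duy fx fy fu e :: real
  assumes "dxy \<le> dxu + duy" "fx \<le> fu + dxu" "fy \<le> fu + duy" "0 \<le> fu" "0 \<le> e"
  shows "min dxy (fx + fy + e) \<le> min dxu (fx + fu + e) + min duy (fu + fy + e)"
  using assms unfolding min_def by auto

lemma dist_min_mult:
  fixes a :: real assumes "0 < a" shows "a * min 1 (A / a) = min a A"
  using assms by (simp add: min_mult_distrib_left)

lemma lip_cont:
  fixes \<phi> :: "'a::metric_space \<Rightarrow> real"
  assumes L: "\<And>x y. \<phi> x \<le> \<phi> y + dist x y"
  shows "continuous_on UNIV \<phi>"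
  unfolding continuous_on_iff
proof (intro ballI allI impI)
  fix x :: 'a and e :: real assume e: "0 < e"
  show "\<exists>d>0. \<forall>x'\<in>UNIV. dist x' x < d \<longrightarrow> dist (\<phi> x') (\<phi> x) < e"
  proof (intro exI[of _ e] conjI ballI impI)
    fix x' assume "dist x' x < e"
    moreover have "\<phi> x' \<le> \<phi> x + dist x' x" "\<phi> x \<le> \<phi> x' + dist x x'" by (rule L)+
    ultimately show "dist (\<phi> x') (\<phi> x) < e" by (simp add: dist_real_def dist_commute)
  qed (rule e)
qed

context setting begin

lemma mk_g:
  fixes \<phi> :: "'a \<Rightarrow> real" and \<epsilon> :: real
  assumes \<phi>0: "\<And>x. 0 \<le> \<phi> x" and \<phi>L: "\<And>x y. \<phi> x \<le> \<phi> y + dist x y" and \<epsilon>: "0 \<le> \<epsilon>"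
  obtains g where "g \<in> G_set \<iota>" "\<And>w. 0 \<le> g w \<and> g w \<le> 1"
    "\<And>x y. x \<noteq> y \<Longrightarrow> g (\<iota> (x, y)) = min 1 ((\<phi> x + \<phi> y + \<epsilon>) / dist x y)"
proof -
  define h where "h p = min 1 ((\<phi> (fst p) + \<phi> (snd p) + \<epsilon>) / dist (fst p) (snd p))" for p :: "'a \<times> 'a"
  have \<phi>c: "continuous_on UNIV \<phi>" by (rule lip_cont[OF \<phi>L])
  have hc: "continuous_on Mtilde h" unfolding h_def
    by (intro continuous_intros continuous_on_compose2[OF \<phi>c]) (auto simp: Mtilde_def)
  have hr: "h p \<in> {0..1}" if "p \<in> Mtilde" for p
  proof -
    have "fst p \<noteq> snd p" using that by (auto simp: Mtilde_def)
    hence "0 < dist (fst p) (snd p)" by simp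
    moreover have "0 \<le> \<phi> (fst p) + \<phi> (snd p) + \<epsilon>" using \<phi>0 \<epsilon> by (simp add: add_nonneg_nonneg)
    ultimately show ?thesis unfolding h_def by simp
  qed
  have hb: "bounded (h ` Mtilde)" unfolding bounded_real
    by (rule exI[of _ 1]) (use hr in auto)
  obtain g where gc: "continuous_on UNIV g" and gh: "\<And>p. p \<in> Mtilde \<Longrightarrow> g (\<iota> p) = h p"
    using ext_b[OF hc hb] by blast
  have gx: "g (\<iota> (x, y)) = min 1 ((\<phi> x + \<phi> y + \<epsilon>) / dist x y)" if "x \<noteq> y" for x y
    using gh[of "(x, y)"] that by (simp add: Mtilde_def h_def)
  have gr: "0 \<le> g w \<and> g w \<le> 1" for w
  proof -
    have "g w \<in> {0..1}"
    proof (rule dens_b[OF gc closed_atLeastAtMost open_UNIV])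
      fix x y :: 'a assume "x \<noteq> y"
      thus "g (\<iota> (x, y)) \<in> {0..1}" using gh[of "(x,y)"] hr[of "(x,y)"] by (simp add: Mtilde_def)
    qed simp
    thus ?thesis by simp
  qed
  have gG: "g \<in> G_set \<iota>" unfolding G_set_def mem_Collect_eq
  proof (intro conjI allI impI gc)
    fix x u y :: 'a assume d: "x \<noteq> u \<and> u \<noteq> y \<and> x \<noteq> y"
    have e1: "dist x y * g (\<iota> (x, y)) = min (dist x y) (\<phi> x + \<phi> y + \<epsilon>)"
      using d by (simp add: gx dist_min_mult)
    have e2: "dist x u * g (\<iota> (x, u)) = min (dist x u) (\<phi> x + \<phi> u + \<epsilon>)"
      using d by (simp add: gx dist_min_mult)
    have e3: "dist u y * g (\<iota> (u, y)) = min (dist u y) (\<phi> u + \<phi> y + \<epsilon>)"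
      using d by (simp add: gx dist_min_mult)
    have "min (dist x y) (\<phi> x + \<phi> y + \<epsilon>) \<le> min (dist x u) (\<phi> x + \<phi> u + \<epsilon>) + min (dist u y) (\<phi> u + \<phi> y + \<epsilon>)"
    proof (rule rho_tri)
      show "dist x y \<le> dist x u + dist u y" by (rule dist_triangle)
      show "\<phi> x \<le> \<phi> u + dist x u" by (rule \<phi>L)
      have "\<phi> y \<le> \<phi> u + dist y u" by (rule \<phi>L)
      thus "\<phi> y \<le> \<phi> u + dist u y" by (simp add: dist_commute)
    qed (use \<phi>0 \<epsilon> in auto)
    thus "dist x y * g (\<iota> (x, y)) \<le> dist x u * g (\<iota> (x, u)) + dist u y * g (\<iota> (u, y))"
      using e1 e2 e3 by simp
  qed
  show ?thesis using that[OF gG gr gx] .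
qed

end


lemma pos_ennreal_below: "0 < (t::ennreal) \<Longrightarrow> \<exists>r>0. ennreal r < t"
proof (cases t)
  case (real q)
  assume "0 < t"
  hence "0 < q" using real by simp
  thus ?thesis using real by (intro exI[of _ "q / 2"]) (simp add: ennreal_less_iff)
next
  case top
  thus ?thesis by (intro exI[of _ 1]) simp
qed

context setting begin

lemma dd_dist: "x \<noteq> y \<Longrightarrow> dd (\<iota> (x, y)) = ennreal (dist x y)"
  using dd_iota by simp

lemma p1_j: "x \<noteq> y \<Longrightarrow> p1 (\<iota> (x, y)) = j x"
  using p_iota by simp

lemma p2_j: "x \<noteq> y \<Longrightarrow> p2 (\<iota> (x, y)) = j y"
  using p_iota by simp

lemma D_frakC: "UNIV - dd -` {0} \<in> frakC \<iota>"
proof (rule frakC_crit[OF cUb, where C' = UNIV and A = "\<lambda>k. dd -` {0}"])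
  have cl: "closed (dd -` {0})" by (rule closed_vimage[OF closed_singleton dd_cont])
  show "UNIV - dd -` {0} \<in> sets borel" using cl by (intro borel_open) (simp add: open_Diff)
  show "dd -` {0} \<in> sets borel" for k :: nat using cl by (rule borel_closed)
  show "UNIV \<in> frakC \<iota>" by (rule frakC_UNIV)
  show "UNIV - dd -` {0} \<subseteq> UNIV" by simp
  show "(UNIV - (UNIV - dd -` {0})) \<inter> UNIV \<subseteq> (\<Union>k::nat. dd -` {0})" by blast
  fix k :: nat
  show "\<exists>c>(0::real). \<forall>K \<tau>. compact K \<longrightarrow> K \<subseteq> UNIV - dd -` {0} \<longrightarrow> \<tau> > 0 \<longrightarrow>
     (\<exists>g V. g \<in> G_set \<iota> \<and> (\<forall>w. 0 \<le> g w \<and> g w \<le> 1) \<and> open V \<and> K \<subseteq> V \<and>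
        (\<forall>w\<in>V. g w \<le> \<tau>) \<and> (\<forall>w\<in>dd -` {0}. c \<le> g w))"
  proof (intro exI[of _ "1::real"] conjI allI impI)
    fix K :: "'b set" and \<tau> :: real
    assume K: "compact K" "K \<subseteq> UNIV - dd -` {0}" and \<tau>: "\<tau> > 0"
    obtain r where r: "r > 0" "\<forall>w\<in>K. ennreal r < dd w"
    proof (cases "K = {}")
      case True thus ?thesis using that[of 1] by simp
    next
      case False
      obtain s where s: "s \<in> K" "\<forall>w\<in>K. dd s \<le> dd w"
        using continuous_attains_inf[OF K(1) False continuous_on_subset[OF dd_cont]] by auto
      have "dd s \<noteq> 0" using s(1) K(2) by auto
      hence "0 < dd s" by (metis not_gr_zero)
      then obtain r where "r > 0" "ennreal r < dd s" using pos_ennreal_below by blast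
      thus ?thesis using that[of r] s(2) by (meson order_less_le_trans)
    qed
    define \<epsilon> where "\<epsilon> = \<tau> * r"
    have \<epsilon>: "\<epsilon> > 0" unfolding \<epsilon>_def using \<tau> r by simp
    obtain g where g: "g \<in> G_set \<iota>" "\<And>w. 0 \<le> g w \<and> g w \<le> 1"
      "\<And>x y. x \<noteq> y \<Longrightarrow> g (\<iota> (x, y)) = min 1 (((\<lambda>_. 0) x + (\<lambda>_. 0) y + \<epsilon>) / dist x y)"
      by (rule mk_g[of "\<lambda>_. 0" \<epsilon>]) (use \<epsilon> in auto)
    have gc: "continuous_on UNIV g" by (rule G_cont[OF g(1)])
    define V where "V = {w. ennreal r < dd w}"
    have oV: "open V" unfolding V_def by (intro open_Collect_less continuous_on_const dd_cont)
    have KV: "K \<subseteq> V" using r(2) unfolding V_def by auto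
    have gV: "\<forall>w\<in>V. g w \<le> \<tau>"
    proof
      fix w assume w: "w \<in> V"
      have "g w \<in> {..\<tau>}"
      proof (rule dens_b[OF gc closed_atMost oV _ w])
        fix x y :: 'a assume xy: "x \<noteq> y" "\<iota> (x, y) \<in> V"
        hence "ennreal r < ennreal (dist x y)" unfolding V_def by (simp add: dd_dist)
        hence "r < dist x y" using r(1) by (simp add: ennreal_less_iff)
        hence "\<epsilon> / dist x y \<le> \<tau>" unfolding \<epsilon>_def using r \<tau>
          by (simp add: divide_le_eq mult_left_mono)
        thus "g (\<iota> (x, y)) \<in> {..\<tau>}" using g(3)[OF xy(1)] by simp
      qed
      thus "g w \<le> \<tau>" by simp
    qed
    have gA: "\<forall>w\<in>dd -` {0}. 1 \<le> g w"
    proof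
      fix w assume w: "w \<in> dd -` {0}"
      define V' where "V' = {w. dd w < ennreal \<epsilon>}"
      have oV': "open V'" unfolding V'_def by (intro open_Collect_less continuous_on_const dd_cont)
      have wV': "w \<in> V'" using w \<epsilon> unfolding V'_def by simp
      have "g w \<in> {1..}"
      proof (rule dens_b[OF gc closed_atLeast oV' _ wV'])
        fix x y :: 'a assume xy: "x \<noteq> y" "\<iota> (x, y) \<in> V'"
        hence "dist x y < \<epsilon>" unfolding V'_def by (simp add: dd_dist ennreal_less_iff)
        moreover have "0 < dist x y" using xy(1) by simp
        ultimately have "1 \<le> \<epsilon> / dist x y" by (simp add: le_divide_eq)
        thus "g (\<iota> (x, y)) \<in> {1..}" using g(3)[OF xy(1)] by simp
      qed
      thus "1 \<le> g w" by simp
    qed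
    show "\<exists>g V. g \<in> G_set \<iota> \<and> (\<forall>w. 0 \<le> g w \<and> g w \<le> 1) \<and> open V \<and> K \<subseteq> V \<and>
        (\<forall>w\<in>V. g w \<le> \<tau>) \<and> (\<forall>w\<in>dd -` {0}. 1 \<le> g w)"
      using g(1,2) oV KV gV gA by blast
  qed simp
qed

lemma half_le_min: fixes d S :: real assumes "0 < d" "d \<le> 2 * S" shows "1/2 \<le> min 1 (S / d)"
  using assms by (simp add: le_divide_eq)

lemma d1_cont: "continuous_on UNIV (\<lambda>w. d0 (p1 w))"
  by (rule continuous_on_compose2[OF d0_cont p1_cont]) simp

lemma d2_cont: "continuous_on UNIV (\<lambda>w. d0 (p2 w))"
  by (rule continuous_on_compose2[OF d0_cont p2_cont]) simp

definition Rp :: "'b set" where "Rp = {w. d0 (p1 w) < \<infinity> \<and> d0 (p2 w) < \<infinity>}"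

lemma Rp_open: "open Rp"
  unfolding Rp_def
  by (intro open_Collect_conj open_Collect_less d1_cont d2_cont continuous_on_const)

lemma d0_j_dist: "x \<noteq> y \<Longrightarrow> d0 (p1 (\<iota> (x, y))) = ennreal (dist x z)"
  "x \<noteq> y \<Longrightarrow> d0 (p2 (\<iota> (x, y))) = ennreal (dist y z)"
  using d0_j by (simp_all add: p1_j p2_j)

lemma far_lower:
  fixes n :: real and x y :: 'a
  assumes n: "n > 0" and xy: "x \<noteq> y" and far: "3 * n < dist x z \<or> 3 * n < dist y z"
  shows "1/2 \<le> min 1 ((max 0 (dist x z - n) + max 0 (dist y z - n) + 0) / dist x y)"
proof (rule half_le_min)
  show "0 < dist x y" using xy by simp
  have "dist x y \<le> dist x z + dist y z" by (rule dist_triangle2)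
  thus "dist x y \<le> 2 * (max 0 (dist x z - n) + max 0 (dist y z - n) + 0)"
    using far n by (auto simp: max_def)
qed

lemma Rp_frakC: "Rp \<in> frakC \<iota>"
proof (rule frakC_crit[OF cUb, where C' = UNIV and A = "\<lambda>k. UNIV - Rp"])
  show "Rp \<in> sets borel" using Rp_open by (rule borel_open)
  show "UNIV - Rp \<in> sets borel" for k :: nat using Rp_open by (intro borel_closed) (simp add: closed_Diff)
  show "UNIV \<in> frakC \<iota>" by (rule frakC_UNIV)
  show "Rp \<subseteq> UNIV" by simp
  show "(UNIV - Rp) \<inter> UNIV \<subseteq> (\<Union>k::nat. UNIV - Rp)" by blast
  fix k :: nat
  show "\<exists>c>(0::real). \<forall>K \<tau>. compact K \<longrightarrow> K \<subseteq> Rp \<longrightarrow> \<tau> > 0 \<longrightarrow>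
     (\<exists>g V. g \<in> G_set \<iota> \<and> (\<forall>w. 0 \<le> g w \<and> g w \<le> 1) \<and> open V \<and> K \<subseteq> V \<and>
        (\<forall>w\<in>V. g w \<le> \<tau>) \<and> (\<forall>w\<in>UNIV - Rp. c \<le> g w))"
  proof (intro exI[of _ "1/2::real"] conjI allI impI)
    fix K :: "'b set" and \<tau> :: real
    assume K: "compact K" "K \<subseteq> Rp" and \<tau>: "\<tau> > 0"
    obtain n :: real where n: "n > 0" "\<forall>w\<in>K. d0 (p1 w) < ennreal n \<and> d0 (p2 w) < ennreal n"
    proof (cases "K = {}")
      case True thus ?thesis using that[of 1] by simp
    next
      case False
      have mc: "continuous_on K (\<lambda>w. max (d0 (p1 w)) (d0 (p2 w)))"
        by (intro continuous_on_subset[OF continuous_on_max[OF d1_cont d2_cont]]) simp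
      obtain s where s: "s \<in> K" "\<forall>w\<in>K. max (d0 (p1 w)) (d0 (p2 w)) \<le> max (d0 (p1 s)) (d0 (p2 s))"
        using continuous_attains_sup[OF K(1) False mc] by auto
      have "max (d0 (p1 s)) (d0 (p2 s)) < \<infinity>" using s(1) K(2) unfolding Rp_def by auto
      then obtain q where q: "0 \<le> q" "max (d0 (p1 s)) (d0 (p2 s)) = ennreal q"
        by (cases "max (d0 (p1 s)) (d0 (p2 s))") auto
      have "\<forall>w\<in>K. d0 (p1 w) < ennreal (q + 1) \<and> d0 (p2 w) < ennreal (q + 1)"
      proof
        fix w assume "w \<in> K"
        hence "max (d0 (p1 w)) (d0 (p2 w)) \<le> ennreal q" using s(2) q(2) by simp
        moreover have "ennreal q < ennreal (q + 1)" using q(1) by (simp add: ennreal_less_iff)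
        ultimately show "d0 (p1 w) < ennreal (q + 1) \<and> d0 (p2 w) < ennreal (q + 1)"
          by (meson max.boundedE order_le_less_trans)
      qed
      thus ?thesis using that[of "q + 1"] q(1) by simp
    qed
    define \<phi> where "\<phi> x = max 0 (dist x z - n)" for x
    have \<phi>0: "0 \<le> \<phi> x" for x unfolding \<phi>_def by simp
    have \<phi>L: "\<phi> x \<le> \<phi> y + dist x y" for x y
    proof -
      have "dist x z \<le> dist x y + dist y z" by (rule dist_triangle)
      thus ?thesis unfolding \<phi>_def by (auto simp: max_def)
    qed
    obtain g where g: "g \<in> G_set \<iota>" "\<And>w. 0 \<le> g w \<and> g w \<le> 1"
      "\<And>x y. x \<noteq> y \<Longrightarrow> g (\<iota> (x, y)) = min 1 ((\<phi> x + \<phi> y + 0) / dist x y)"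
      by (rule mk_g[of \<phi> 0]) (use \<phi>0 \<phi>L in auto)
    have gc: "continuous_on UNIV g" by (rule G_cont[OF g(1)])
    define V where "V = {w. d0 (p1 w) < ennreal n \<and> d0 (p2 w) < ennreal n}"
    have oV: "open V" unfolding V_def
      by (intro open_Collect_conj open_Collect_less d1_cont d2_cont continuous_on_const)
    have KV: "K \<subseteq> V" using n(2) unfolding V_def by auto
    have gV: "\<forall>w\<in>V. g w \<le> \<tau>"
    proof
      fix w assume w: "w \<in> V"
      have "g w \<in> {..\<tau>}"
      proof (rule dens_b[OF gc closed_atMost oV _ w])
        fix x y :: 'a assume xy: "x \<noteq> y" "\<iota> (x, y) \<in> V"
        hence "dist x z < n" "dist y z < n" unfolding V_def
          by (simp_all add: d0_j_dist ennreal_less_iff)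
        hence "\<phi> x = 0" "\<phi> y = 0" unfolding \<phi>_def by simp_all
        thus "g (\<iota> (x, y)) \<in> {..\<tau>}" using g(3)[OF xy(1)] \<tau> by simp
      qed
      thus "g w \<le> \<tau>" by simp
    qed
    have gA: "\<forall>w\<in>UNIV - Rp. 1/2 \<le> g w"
    proof
      fix w assume w: "w \<in> UNIV - Rp"
      define V' where "V' = {w. ennreal (3 * n) < d0 (p1 w)} \<union> {w. ennreal (3 * n) < d0 (p2 w)}"
      have oV': "open V'" unfolding V'_def
        by (intro open_Un open_Collect_less d1_cont d2_cont continuous_on_const)
      have wV': "w \<in> V'" using w unfolding V'_def Rp_def by (auto simp: less_top[symmetric])
      have "g w \<in> {1/2..}"
      proof (rule dens_b[OF gc closed_atLeast oV' _ wV'])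
        fix x y :: 'a assume xy: "x \<noteq> y" "\<iota> (x, y) \<in> V'"
        hence "3 * n < dist x z \<or> 3 * n < dist y z" unfolding V'_def using n(1)
          by (auto simp: d0_j_dist ennreal_less_iff)
        from far_lower[OF n(1) xy(1) this]
        show "g (\<iota> (x, y)) \<in> {1/2..}" using g(3)[OF xy(1)] unfolding \<phi>_def by simp
      qed
      thus "1/2 \<le> g w" by simp
    qed
    show "\<exists>g V. g \<in> G_set \<iota> \<and> (\<forall>w. 0 \<le> g w \<and> g w \<le> 1) \<and> open V \<and> K \<subseteq> V \<and>
        (\<forall>w\<in>V. g w \<le> \<tau>) \<and> (\<forall>w\<in>UNIV - Rp. 1/2 \<le> g w)"
      using g(1,2) oV KV gV gA by blast
  qed simp
qed

end


lemma low_bound: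
  fixes d D s S :: real
  assumes "0 < d" "d < D" "0 < s" "s \<le> S" "s / D \<le> 1"
  shows "s / D \<le> min 1 (S / d)"
proof -
  have "s / D \<le> s / d" using assms by (intro divide_left_mono) auto
  also have "\<dots> \<le> S / d" using assms by (intro divide_right_mono) auto
  finally show ?thesis using assms(5) by simp
qed

context setting begin

lemma Rp_dd_fin: assumes "w \<in> Rp" shows "dd w < \<infinity>"
proof -
  obtain a where a: "0 \<le> a" "d0 (p1 w) = ennreal a"
    using assms unfolding Rp_def by (cases "d0 (p1 w)") auto
  obtain b where b: "0 \<le> b" "d0 (p2 w) = ennreal b"
    using assms unfolding Rp_def by (cases "d0 (p2 w)") auto
  define V where "V = {w'. d0 (p1 w') < ennreal (a + 1) \<and> d0 (p2 w') < ennreal (b + 1)}"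
  have oV: "open V" unfolding V_def
    by (intro open_Collect_conj open_Collect_less d1_cont d2_cont continuous_on_const)
  have wV: "w \<in> V" unfolding V_def using a b by (simp add: ennreal_less_iff)
  have "dd w \<in> {..ennreal (a + b + 2)}"
  proof (rule dens_b[OF dd_cont closed_atMost oV _ wV])
    fix x y :: 'a assume xy: "x \<noteq> y" "\<iota> (x, y) \<in> V"
    hence "dist x z < a + 1" "dist y z < b + 1" unfolding V_def
      by (simp_all add: d0_j_dist ennreal_less_iff)
    moreover have "dist x y \<le> dist x z + dist y z" by (rule dist_triangle2)
    ultimately have "dist x y \<le> a + b + 2" by simp
    thus "dd (\<iota> (x, y)) \<in> {..ennreal (a + b + 2)}" using xy(1) by (simp add: dd_dist ennreal_leI)
  qed
  hence "dd w \<le> ennreal (a + b + 2)" by simp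
  also have "\<dots> < \<infinity>" by simp
  finally show ?thesis .
qed

definition S2 :: "'b set" where "S2 = {w. p1 w \<in> range j \<and> p2 w \<in> range j}"

lemma p1_meas: "p1 \<in> borel_measurable borel" by (rule borel_measurable_continuous_onI[OF p1_cont])
lemma p2_meas: "p2 \<in> borel_measurable borel" by (rule borel_measurable_continuous_onI[OF p2_cont])
lemma dd_meas: "dd \<in> borel_measurable borel" by (rule borel_measurable_continuous_onI[OF dd_cont])

lemma S2_borel: "S2 \<in> sets borel"
proof -
  have "p1 -` range j \<inter> space borel \<in> sets borel" by (rule measurable_sets[OF p1_meas range_j_borel])
  moreover have "p2 -` range j \<inter> space borel \<in> sets borel" by (rule measurable_sets[OF p2_meas range_j_borel])
  moreover have "S2 = (p1 -` range j \<inter> space borel) \<inter> (p2 -` range j \<inter> space borel)"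
    unfolding S2_def by auto
  ultimately show ?thesis by simp
qed

lemma S2_Rp: "S2 \<subseteq> Rp"
  unfolding S2_def Rp_def using d0_j by auto

definition AA :: "nat \<Rightarrow> 'b set" where
  "AA n = {w. dd w \<le> ennreal (real n + 1) \<and>
     (1 / (real n + 1) \<le> ee (p1 w) \<or> 1 / (real n + 1) \<le> ee (p2 w))}"

lemma AA_borel: "AA n \<in> sets borel"
proof -
  have m1: "(\<lambda>w. ee (p1 w)) \<in> borel_measurable borel"
    using measurable_comp[OF p1_meas ee_meas] by (simp add: o_def)
  have m2: "(\<lambda>w. ee (p2 w)) \<in> borel_measurable borel"
    using measurable_comp[OF p2_meas ee_meas] by (simp add: o_def)
  have s1: "dd -` {..ennreal (real n + 1)} \<inter> space borel \<in> sets borel"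
    by (rule measurable_sets[OF dd_meas]) simp
  have s2: "(\<lambda>w. ee (p1 w)) -` {1 / (real n + 1)..} \<inter> space borel \<in> sets borel"
    by (rule measurable_sets[OF m1]) simp
  have s3: "(\<lambda>w. ee (p2 w)) -` {1 / (real n + 1)..} \<inter> space borel \<in> sets borel"
    by (rule measurable_sets[OF m2]) simp
  have "AA n = (dd -` {..ennreal (real n + 1)} \<inter> space borel) \<inter>
     (((\<lambda>w. ee (p1 w)) -` {1 / (real n + 1)..} \<inter> space borel) \<union>
      ((\<lambda>w. ee (p2 w)) -` {1 / (real n + 1)..} \<inter> space borel))"
    unfolding AA_def by auto
  thus ?thesis using s1 s2 s3 by simp
qed

lemma ee_pos_bound: assumes "\<xi> \<notin> range j" obtains m :: nat where "1 / (real m + 1) \<le> ee \<xi>"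
proof -
  have "ee \<xi> \<noteq> 0" using assms ee_zero by blast
  hence "0 < ee \<xi>" using ee_nonneg[of \<xi>] by simp
  then obtain m where "inverse (of_nat (Suc m)) < ee \<xi>" using reals_Archimedean by blast
  hence "1 / (real m + 1) \<le> ee \<xi>" by (simp add: inverse_eq_divide add.commute)
  thus ?thesis by (rule that)
qed

lemma AA_cover: "(UNIV - S2) \<inter> Rp \<subseteq> (\<Union>n. AA n)"
proof
  fix w assume w: "w \<in> (UNIV - S2) \<inter> Rp"
  have "dd w < \<infinity>" using w Rp_dd_fin by blast
  then obtain q where q: "0 \<le> q" "dd w = ennreal q" by (cases "dd w") auto
  obtain n1 :: nat where n1: "q \<le> real n1" using real_arch_simple by blast
  obtain m :: nat where m: "1 / (real m + 1) \<le> ee (p1 w) \<or> 1 / (real m + 1) \<le> ee (p2 w)"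
  proof (cases "p1 w \<in> range j")
    case True
    hence "p2 w \<notin> range j" using w unfolding S2_def by auto
    then obtain m where "1 / (real m + 1) \<le> ee (p2 w)" by (rule ee_pos_bound)
    thus ?thesis using that by blast
  next
    case False
    then obtain m where "1 / (real m + 1) \<le> ee (p1 w)" by (rule ee_pos_bound)
    thus ?thesis using that by blast
  qed
  define N where "N = max n1 m"
  have "1 / (real N + 1) \<le> 1 / (real m + 1)" unfolding N_def
    by (intro divide_left_mono) auto
  hence "1 / (real N + 1) \<le> ee (p1 w) \<or> 1 / (real N + 1) \<le> ee (p2 w)" using m by linarith
  moreover have "q \<le> real N + 1" using n1 unfolding N_def by simp
  hence "dd w \<le> ennreal (real N + 1)" using q(2) by (simp only: ennreal_leI)
  ultimately have "w \<in> AA N" unfolding AA_def by simp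
  thus "w \<in> (\<Union>n. AA n)" by blast
qed

lemma Dx_lt_dist: "Dx f (j x) < \<delta> \<Longrightarrow> \<delta> \<le> 1 \<Longrightarrow> dist x f < \<delta>"
  by (simp add: Dx_j min_def split: if_splits)

lemma S2_key:
  fixes n :: nat and K :: "'b set" and \<tau> :: real
  defines "a \<equiv> 1 / (real n + 1)"
  assumes K: "compact K" "K \<subseteq> S2" and \<tau>: "\<tau> > 0"
  shows "\<exists>g V. g \<in> G_set \<iota> \<and> (\<forall>w. 0 \<le> g w \<and> g w \<le> 1) \<and> open V \<and> K \<subseteq> V \<and>
        (\<forall>w\<in>V. g w \<le> \<tau>) \<and> (\<forall>w\<in>AA n. (a / 4) / (real n + 2) \<le> g w)"
proof -
  define \<delta> where "\<delta> = a / 4"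
  have a0: "0 < a" "a \<le> 1" unfolding a_def by auto
  have \<delta>0: "0 < \<delta>" "\<delta> < 1" unfolding \<delta>_def using a0 by auto
  define Ob where "Ob c = {w. Dx (fst c) (p1 w) < \<delta> \<and> Dx (snd c) (p2 w) < \<delta>}" for c :: "'a \<times> 'a"
  have oOb: "open (Ob c)" for c unfolding Ob_def
    by (intro open_Collect_conj open_Collect_less continuous_on_const
        continuous_on_compose2[OF Dx_cont p1_cont] continuous_on_compose2[OF Dx_cont p2_cont]) auto
  have cov: "K \<subseteq> (\<Union>c\<in>UNIV. Ob c)"
  proof
    fix w assume "w \<in> K"
    hence "w \<in> S2" using K(2) by blast
    then obtain a' b' where ab: "p1 w = j a'" "p2 w = j b'" unfolding S2_def by auto
    hence "w \<in> Ob (a', b')" unfolding Ob_def using \<delta>0 by (simp add: Dx_j)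
    thus "w \<in> (\<Union>c\<in>UNIV. Ob c)" by blast
  qed
  obtain P where P0: "P \<subseteq> UNIV" and P: "finite P" "K \<subseteq> (\<Union>c\<in>P. Ob c)"
    by (rule compactE_image[OF K(1) oOb cov])
  define F where "F = insert z (fst ` P \<union> snd ` P)"
  have F: "finite F" "F \<noteq> {}" unfolding F_def using P(1) by auto
  define Q where "Q = (\<Union>f\<in>F. {\<xi>. Dx f \<xi> < \<delta>})"
  have oQ: "open Q" unfolding Q_def
    by (intro open_UN ballI open_Collect_less Dx_cont continuous_on_const)
  define V where "V = p1 -` Q \<inter> p2 -` Q"
  have oV: "open V" unfolding V_def by (intro open_Int open_vimage oQ p1_cont p2_cont)
  have KV: "K \<subseteq> V"
  proof
    fix w assume "w \<in> K"
    then obtain c where c: "c \<in> P" "w \<in> Ob c" using P(2) by blast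
    have "fst c \<in> F" "snd c \<in> F" unfolding F_def using c(1) by auto
    thus "w \<in> V" using c(2) unfolding V_def Q_def Ob_def by auto
  qed
  define \<phi> where "\<phi> x = max 0 (infdist x F - \<delta>)" for x
  have \<phi>0: "0 \<le> \<phi> x" for x unfolding \<phi>_def by simp
  have \<phi>L: "\<phi> x \<le> \<phi> y + dist x y" for x y
  proof -
    have "infdist x F \<le> infdist y F + dist x y" by (rule infdist_triangle)
    thus ?thesis unfolding \<phi>_def by (auto simp: max_def)
  qed
  obtain g where g: "g \<in> G_set \<iota>" "\<And>w. 0 \<le> g w \<and> g w \<le> 1"
    "\<And>x y. x \<noteq> y \<Longrightarrow> g (\<iota> (x, y)) = min 1 ((\<phi> x + \<phi> y + 0) / dist x y)"
    by (rule mk_g[of \<phi> 0]) (use \<phi>0 \<phi>L in auto)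
  have gc: "continuous_on UNIV g" by (rule G_cont[OF g(1)])
  have \<phi>Q: "\<phi> x = 0" if jQ: "j x \<in> Q" for x
  proof -
    obtain f where f: "f \<in> F" "Dx f (j x) < \<delta>" using jQ unfolding Q_def by blast
    have "dist x f < \<delta>" using Dx_lt_dist[OF f(2)] \<delta>0 by simp
    hence "infdist x F < \<delta>" using infdist_le[OF f(1), of x] by simp
    thus ?thesis unfolding \<phi>_def by simp
  qed
  have gV: "\<forall>w\<in>V. g w \<le> \<tau>"
  proof
    fix w assume w: "w \<in> V"
    have "g w \<in> {..\<tau>}"
    proof (rule dens_b[OF gc closed_atMost oV _ w])
      fix x y :: 'a assume xy: "x \<noteq> y" "\<iota> (x, y) \<in> V"
      hence "j x \<in> Q" "j y \<in> Q" unfolding V_def by (simp_all add: p1_j p2_j)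
      hence "\<phi> x = 0" "\<phi> y = 0" using \<phi>Q by blast+
      thus "g (\<iota> (x, y)) \<in> {..\<tau>}" using g(3)[OF xy(1)] \<tau> by simp
    qed
    thus "g w \<le> \<tau>" by simp
  qed
  have far: "a / 4 \<le> \<phi> x" if farx: "\<forall>f\<in>F. a / 2 < Dx f (j x)" for x
  proof -
    have "a / 2 \<le> infdist x F" unfolding infdist_notempty[OF F(2)]
    proof (rule cINF_greatest[OF F(2)])
      fix f assume "f \<in> F"
      hence "a / 2 < min 1 (dist x f)" using farx by (simp add: Dx_j)
      thus "a / 2 \<le> dist x f" by simp
    qed
    thus ?thesis unfolding \<phi>_def \<delta>_def by (auto simp: max_def)
  qed
  have lowc: "(a / 4) / (real n + 2) \<le> min 1 ((\<phi> x + \<phi> y + 0) / dist x y)"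
    if "x \<noteq> y" "dist x y < real n + 2" "a / 4 \<le> \<phi> x + \<phi> y" for x y
  proof (rule low_bound)
    show "0 < dist x y" using that(1) by simp
    show "dist x y < real n + 2" by (rule that(2))
    show "0 < a / 4" using a0 by simp
    show "a / 4 \<le> \<phi> x + \<phi> y + 0" using that(3) by simp
    show "a / 4 / (real n + 2) \<le> 1" using a0 by simp
  qed
  have gA: "\<forall>w\<in>AA n. (a / 4) / (real n + 2) \<le> g w"
  proof
    fix w assume w: "w \<in> AA n"
    have ddw: "dd w < ennreal (real n + 2)"
    proof -
      have "dd w \<le> ennreal (real n + 1)" using w unfolding AA_def by simp
      also have "\<dots> < ennreal (real n + 2)" by (simp add: ennreal_less_iff)
      finally show ?thesis .
    qed
    have ee_or: "a \<le> ee (p1 w) \<or> a \<le> ee (p2 w)" using w unfolding AA_def a_def by simp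
    define V1 where "V1 = {w'. dd w' < ennreal (real n + 2)} \<inter> (\<Inter>f\<in>F. {w'. a / 2 < Dx f (p1 w')})"
    define V2 where "V2 = {w'. dd w' < ennreal (real n + 2)} \<inter> (\<Inter>f\<in>F. {w'. a / 2 < Dx f (p2 w')})"
    have oV1: "open V1" unfolding V1_def
      by (intro open_Int open_INT F(1) ballI open_Collect_less continuous_on_const dd_cont
          continuous_on_compose2[OF Dx_cont p1_cont]) auto
    have oV2: "open V2" unfolding V2_def
      by (intro open_Int open_INT F(1) ballI open_Collect_less continuous_on_const dd_cont
          continuous_on_compose2[OF Dx_cont p2_cont]) auto
    have "w \<in> V1 \<or> w \<in> V2"
    proof (cases "a \<le> ee (p1 w)")
      case True
      have "a / 2 < Dx f (p1 w)" for f using True ee_le[of "p1 w" f] a0 by simp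
      thus ?thesis unfolding V1_def using ddw by simp
    next
      case False
      hence "a \<le> ee (p2 w)" using ee_or by simp
      hence "a / 2 < Dx f (p2 w)" for f using ee_le[of "p2 w" f] a0 by simp
      thus ?thesis unfolding V2_def using ddw by simp
    qed
    moreover have "g w \<in> {(a / 4) / (real n + 2)..}" if "w \<in> V1"
    proof (rule dens_b[OF gc closed_atLeast oV1 _ that])
      fix x y :: 'a assume xy: "x \<noteq> y" "\<iota> (x, y) \<in> V1"
      have "dd (\<iota> (x, y)) < ennreal (real n + 2)" using xy(2) unfolding V1_def by blast
      hence "ennreal (dist x y) < ennreal (real n + 2)" by (simp only: dd_dist[OF xy(1)])
      hence "dist x y < real n + 2" by (rule ennreal_less_iff[OF zero_le_dist, THEN iffD1])
      moreover have "\<forall>f\<in>F. a / 2 < Dx f (j x)" using xy unfolding V1_def by (simp add: p1_j)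
      hence "a / 4 \<le> \<phi> x + \<phi> y" using far[of x] \<phi>0[of y] by simp
      ultimately show "g (\<iota> (x, y)) \<in> {(a / 4) / (real n + 2)..}"
        using lowc[OF xy(1)] g(3)[OF xy(1)] by simp
    qed
    moreover have "g w \<in> {(a / 4) / (real n + 2)..}" if "w \<in> V2"
    proof (rule dens_b[OF gc closed_atLeast oV2 _ that])
      fix x y :: 'a assume xy: "x \<noteq> y" "\<iota> (x, y) \<in> V2"
      have "dd (\<iota> (x, y)) < ennreal (real n + 2)" using xy(2) unfolding V2_def by blast
      hence "ennreal (dist x y) < ennreal (real n + 2)" by (simp only: dd_dist[OF xy(1)])
      hence "dist x y < real n + 2" by (rule ennreal_less_iff[OF zero_le_dist, THEN iffD1])
      moreover have "\<forall>f\<in>F. a / 2 < Dx f (j y)" using xy unfolding V2_def by (simp add: p2_j)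
      hence "a / 4 \<le> \<phi> x + \<phi> y" using far[of y] \<phi>0[of x] by simp
      ultimately show "g (\<iota> (x, y)) \<in> {(a / 4) / (real n + 2)..}"
        using lowc[OF xy(1)] g(3)[OF xy(1)] by simp
    qed
    ultimately show "(a / 4) / (real n + 2) \<le> g w" by auto
  qed
  show ?thesis using g(1,2) oV KV gV gA by blast
qed

lemma S2_frakC: "S2 \<in> frakC \<iota>"
proof (rule frakC_crit[OF cUb S2_borel Rp_frakC S2_Rp AA_borel AA_cover])
  fix n :: nat
  show "\<exists>c>(0::real). \<forall>K \<tau>. compact K \<longrightarrow> K \<subseteq> S2 \<longrightarrow> \<tau> > 0 \<longrightarrow>
     (\<exists>g V. g \<in> G_set \<iota> \<and> (\<forall>w. 0 \<le> g w \<and> g w \<le> 1) \<and> open V \<and> K \<subseteq> V \<and>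
        (\<forall>w\<in>V. g w \<le> \<tau>) \<and> (\<forall>w\<in>AA n. c \<le> g w))"
  proof (intro exI[of _ "(1 / (real n + 1) / 4) / (real n + 2)"] conjI allI impI)
    fix K :: "'b set" and \<tau> :: real
    assume "compact K" "K \<subseteq> S2" "\<tau> > 0"
    thus "\<exists>g V. g \<in> G_set \<iota> \<and> (\<forall>w. 0 \<le> g w \<and> g w \<le> 1) \<and> open V \<and> K \<subseteq> V \<and>
        (\<forall>w\<in>V. g w \<le> \<tau>) \<and> (\<forall>w\<in>AA n. (1 / (real n + 1) / 4) / (real n + 2) \<le> g w)"
      by (rule S2_key)
  qed simp
qed

end


context setting begin

lemma Mtilde_open: "open (Mtilde :: ('a \<times> 'a) set)"
proof -
  have eq: "{(x, y). x \<noteq> y} = {(x,y) |x y. x \<noteq> (y::'a)}" by auto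
  show ?thesis unfolding Mtilde_def eq by (rule open_diagonal_complement)
qed

lemma diag_dd_zero:
  assumes w: "p1 w = j a" "p2 w = j a"
  shows "dd w = 0"
proof (rule ccontr)
  assume "dd w \<noteq> 0"
  hence "0 < dd w" by (metis not_gr_zero)
  then obtain r where r: "r > 0" "ennreal r < dd w" using pos_ennreal_below by blast
  define t where "t = min (1/2) (r / 2)"
  have t: "0 < t" "t < 1" "2 * t \<le> r" unfolding t_def using r(1) by auto
  define V where "V = {w'. Dx a (p1 w') < t \<and> Dx a (p2 w') < t}"
  have oV: "open V" unfolding V_def
    by (intro open_Collect_conj open_Collect_less continuous_on_const
        continuous_on_compose2[OF Dx_cont p1_cont] continuous_on_compose2[OF Dx_cont p2_cont]) auto
  have wV: "w \<in> V" unfolding V_def using w t by (simp add: Dx_j)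
  have "dd w \<in> {..ennreal r}"
  proof (rule dens_b[OF dd_cont closed_atMost oV _ wV])
    fix x y :: 'a assume xy: "x \<noteq> y" "\<iota> (x, y) \<in> V"
    hence "Dx a (j x) < t" "Dx a (j y) < t" unfolding V_def by (simp_all add: p1_j p2_j)
    hence "dist x a < t" "dist y a < t" using Dx_lt_dist t by auto
    moreover have "dist x y \<le> dist x a + dist y a" by (rule dist_triangle2)
    ultimately have "dist x y \<le> r" using t by simp
    thus "dd (\<iota> (x, y)) \<in> {..ennreal r}" using xy(1) by (simp add: dd_dist ennreal_leI)
  qed
  thus False using r(2) by simp
qed

lemma offdiag_eq:
  assumes w: "p1 w = j a" "p2 w = j b" and ab: "a \<noteq> b"
  shows "w = \<iota> (a, b)"
proof (rule ccontr)
  assume "w \<noteq> \<iota> (a, b)"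
  from hausdorff[OF this] obtain U W where UW: "open U" "open W" "w \<in> U" "\<iota> (a, b) \<in> W" "U \<inter> W = {}"
    by auto
  have "open (\<iota> -` W \<inter> Mtilde)"
    using iota_cont UW(2) continuous_on_open_vimage[OF Mtilde_open] by blast
  moreover have "(a, b) \<in> \<iota> -` W \<inter> Mtilde" using UW(4) ab by (simp add: Mtilde_def)
  ultimately obtain A B where AB: "open A" "open B" "(a, b) \<in> A \<times> B" "A \<times> B \<subseteq> \<iota> -` W \<inter> Mtilde"
    by (rule open_prod_elim)
  have "\<forall>x\<in>A. \<exists>r>0. ball x r \<subseteq> A" using AB(1) by (simp only: open_contains_ball)
  moreover have "a \<in> A" using AB(3) by simp
  ultimately have "\<exists>r>0. ball a r \<subseteq> A" by (rule bspec)
  then obtain r1 where r1: "r1 > 0" "ball a r1 \<subseteq> A" by auto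
  have "\<forall>x\<in>B. \<exists>r>0. ball x r \<subseteq> B" using AB(2) by (simp only: open_contains_ball)
  moreover have "b \<in> B" using AB(3) by simp
  ultimately have "\<exists>r>0. ball b r \<subseteq> B" by (rule bspec)
  then obtain r2 where r2: "r2 > 0" "ball b r2 \<subseteq> B" by auto
  define r where "r = min 1 (min r1 r2)"
  have r: "0 < r" "r \<le> 1" "r \<le> r1" "r \<le> r2" unfolding r_def using r1 r2 by auto
  define Ob where "Ob = U \<inter> {w'. Dx a (p1 w') < r \<and> Dx b (p2 w') < r}"
  have oOb: "open Ob" unfolding Ob_def
    by (intro open_Int UW(1) open_Collect_conj open_Collect_less continuous_on_const
        continuous_on_compose2[OF Dx_cont p1_cont] continuous_on_compose2[OF Dx_cont p2_cont]) auto
  have "w \<in> Ob" unfolding Ob_def using UW(3) w r by (simp add: Dx_j)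
  hence "Ob \<inter> closure (\<iota> ` Mtilde) \<noteq> {}" using dense_b by auto
  hence "Ob \<inter> \<iota> ` Mtilde \<noteq> {}" using open_Int_closure_eq_empty[OF oOb] by blast
  then obtain x y where xy: "(x, y) \<in> Mtilde" "\<iota> (x, y) \<in> Ob" by auto
  have xy0: "x \<noteq> y" using xy(1) unfolding Mtilde_def by simp
  have "Dx a (j x) < r" "Dx b (j y) < r" using xy(2) xy0 unfolding Ob_def by (simp_all add: p1_j p2_j)
  hence "dist x a < r" "dist y b < r" using Dx_lt_dist r by auto
  hence "x \<in> A" "y \<in> B" using r r1(2) r2(2) by (auto simp: dist_commute)
  hence "\<iota> (x, y) \<in> W" using AB(4) by blast
  moreover have "\<iota> (x, y) \<in> U" using xy(2) unfolding Ob_def by simp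
  ultimately show False using UW(5) by blast
qed

lemma S3_eq: "\<iota> ` Mtilde = ((Rp \<inter> (UNIV - dd -` {0})) \<inter> S2)"
proof
  show "\<iota> ` Mtilde \<subseteq> (Rp \<inter> (UNIV - dd -` {0})) \<inter> S2"
  proof
    fix w assume "w \<in> \<iota> ` Mtilde"
    then obtain x y where xy: "x \<noteq> y" "w = \<iota> (x, y)" unfolding Mtilde_def by auto
    have "w \<in> Rp" unfolding Rp_def using xy by (simp add: d0_j_dist)
    moreover have "dd w \<noteq> 0" using xy by (simp add: dd_dist ennreal_eq_0_iff)
    moreover have "w \<in> S2" unfolding S2_def using xy by (simp add: p1_j p2_j)
    ultimately show "w \<in> (Rp \<inter> (UNIV - dd -` {0})) \<inter> S2" by simp
  qed
  show "(Rp \<inter> (UNIV - dd -` {0})) \<inter> S2 \<subseteq> \<iota> ` Mtilde"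
  proof
    fix w assume w: "w \<in> (Rp \<inter> (UNIV - dd -` {0})) \<inter> S2"
    then obtain a b where ab: "p1 w = j a" "p2 w = j b" unfolding S2_def by auto
    have "dd w \<noteq> 0" using w by simp
    hence "a \<noteq> b" using diag_dd_zero ab by metis
    hence "w = \<iota> (a, b)" using offdiag_eq ab by blast
    thus "w \<in> \<iota> ` Mtilde" using \<open>a \<noteq> b\<close> unfolding Mtilde_def by auto
  qed
qed

lemma final:
  "{\<zeta>. d0 (p1 \<zeta>) < \<infinity> \<and> d0 (p2 \<zeta>) < \<infinity>} - dd -` {0} \<in> frakC \<iota> \<and>
   {\<zeta>. p1 \<zeta> \<in> range j \<and> p2 \<zeta> \<in> range j} \<in> frakC \<iota> \<and>
   \<iota> ` Mtilde \<in> frakC \<iota>"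
proof (intro conjI)
  have e1: "{\<zeta>. d0 (p1 \<zeta>) < \<infinity> \<and> d0 (p2 \<zeta>) < \<infinity>} - dd -` {0} = Rp \<inter> (UNIV - dd -` {0})"
    unfolding Rp_def by auto
  have s1: "Rp \<inter> (UNIV - dd -` {0}) \<in> frakC \<iota>" by (rule frakC_Int[OF Rp_frakC D_frakC])
  thus "{\<zeta>. d0 (p1 \<zeta>) < \<infinity> \<and> d0 (p2 \<zeta>) < \<infinity>} - dd -` {0} \<in> frakC \<iota>" using e1 by simp
  show "{\<zeta>. p1 \<zeta> \<in> range j \<and> p2 \<zeta> \<in> range j} \<in> frakC \<iota>" using S2_frakC unfolding S2_def .
  show "\<iota> ` Mtilde \<in> frakC \<iota>" unfolding S3_eq by (rule frakC_Int[OF s1 S2_frakC])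
qed

end

theorem corollary3p31:
  fixes z :: "'a::complete_space"
    and \<iota> :: "'a \<times> 'a \<Rightarrow> 'b::t2_space" and dd :: "'b \<Rightarrow> ennreal"
    and j :: "'a \<Rightarrow> 'c::t2_space" and p1 p2 :: "'b \<Rightarrow> 'c" and d0 :: "'c \<Rightarrow> ennreal"
  assumes "\<exists>x u y :: 'a. x \<noteq> u \<and> u \<noteq> y \<and> x \<noteq> y"
    and "is_stone_cech_compactification Mtilde \<iota>"
    and "continuous_on UNIV dd"
    and "\<forall>x y. x \<noteq> y \<longrightarrow> dd (\<iota> (x, y)) = ennreal (dist x y)"
    and "is_samuel_compactification j"
    and "continuous_on UNIV p1" and "continuous_on UNIV p2"
    and "\<forall>x y. x \<noteq> y \<longrightarrow> p1 (\<iota> (x, y)) = j x \<and> p2 (\<iota> (x, y)) = j y"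
    and "continuous_on UNIV d0"
    and "\<forall>x. d0 (j x) = ennreal (dist x z)"
  shows "{\<zeta>. d0 (p1 \<zeta>) < \<infinity> \<and> d0 (p2 \<zeta>) < \<infinity>} - dd -` {0} \<in> frakC \<iota> \<and>
         {\<zeta>. p1 \<zeta> \<in> range j \<and> p2 \<zeta> \<in> range j} \<in> frakC \<iota> \<and>
         \<iota> ` Mtilde \<in> frakC \<iota>"
proof -
  interpret S: setting z \<iota> dd j p1 p2 d0
    by (rule setting.intro[OF assms(2-10)])
  show ?thesis by (rule S.final)
qed

end
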